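(* Let $X$ be a real Hilbert space and $A,B$ nonempty closed convex subsets of $X$, and let $v$ be the displacement vector of $(A,B)$. Suppose there exist $e\in A\cap(B-v)$ and a continuous linear functional $x^*\in X^*$ with $\|x^*\|=1$ such that $$\inf x^*(B-v)=x^*(e)=\sup x^*(A)$$ and such that $x^*$ strongly exposes $A$ at $e$. Then the couple $(A,B)$ is regular.
   Context: $\mathrm{dist}(x,S)=\inf_{s\in S}\|x-s\|$, $\mathrm{dist}(S,T)=\inf_{s\in S}\mathrm{dist}(s,T)$. $v=P_{\overline{B-A}}(0)$, the metric projection of $0$ onto the closure of $B-A$. $E=\{a\in A:\mathrm{dist}(a,B)=\mathrm{dist}(A,B)\}$, $F=\{b\in B:\mathrm{dist}(b,A)=\mathrm{dist}(A,B)\}$. The couple $(A,B)$ (with $E,F$ nonempty) is regular if for each $\epsilon>0$ there is $\delta>0$ such that $\mathrm{dist}(x,E)\le\epsilon$ whenever $x\in X$ and $\max\{\mathrm{dist}(x,A),\mathrm{dist}(x,B-v)\}\le\delta$. A functional $f\in X^*\setminus\{0\}$ strongly exposes $A$ at $a\in A$ if $f(a)=\sup f(A)$ and every sequence $\{x_n\}\subset A$ with $\lim_n f(x_n)=\sup f(A)$ converges in norm to $a$. *)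

theory Defs
  imports "HOL-Analysis.Analysis"
begin

definition set_dist :: "'a::metric_space set \<Rightarrow> 'a set \<Rightarrow> real" where
  "set_dist S T = (INF s\<in>S. infdist s T)"

definition minus_set :: "'a::real_normed_vector set \<Rightarrow> 'a set \<Rightarrow> 'a set" where
  "minus_set B A = {b - a | a b. a \<in> A \<and> b \<in> B}"

definition displacement :: "'a::real_inner set \<Rightarrow> 'a set \<Rightarrow> 'a" where
  "displacement A B = (THE v. v \<in> closure (minus_set B A) \<and>
                          (\<forall>w \<in> closure (minus_set B A). norm v \<le> norm w))"

definition nearest_A :: "'a::metric_space set \<Rightarrow> 'a set \<Rightarrow> 'a set" where
  "nearest_A A B = {a \<in> A. infdist a B = set_dist A B}"

definition nearest_B :: "'a::metric_space set \<Rightarrow> 'a set \<Rightarrow> 'a set" where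
  "nearest_B A B = {b \<in> B. infdist b A = set_dist A B}"

definition regular_couple :: "'a::real_inner set \<Rightarrow> 'a set \<Rightarrow> bool" where
  "regular_couple A B \<longleftrightarrow> nearest_A A B \<noteq> {} \<and> nearest_B A B \<noteq> {} \<and>
     (\<forall>\<epsilon>>0. \<exists>\<delta>>0. \<forall>x. max (infdist x A) (infdist x ((\<lambda>b. b - displacement A B) ` B)) \<le> \<delta>
                      \<longrightarrow> infdist x (nearest_A A B) \<le> \<epsilon>)"

definition strongly_exposes :: "('a::real_normed_vector \<Rightarrow> real) \<Rightarrow> 'a set \<Rightarrow> 'a \<Rightarrow> bool" where
  "strongly_exposes f A a \<longleftrightarrow> bounded_linear f \<and> f \<noteq> (\<lambda>_. 0) \<and> a \<in> A \<and>
     (\<forall>x\<in>A. f x \<le> f a) \<and>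
     (\<forall>xs. (\<forall>n. xs n \<in> A) \<and> (\<lambda>n. f (xs n)) \<longlonglongrightarrow> f a \<longrightarrow> xs \<longlonglongrightarrow> a)"

end

theory Submission
  imports Defs
begin

lemma ar1: "(i::real) = (p - a - b)/2 \<Longrightarrow> i = (a + b - q)/2 \<Longrightarrow> p + q = 2*a+2*b"
  by (simp add: field_simps)
lemma ar2: "(h::real) = p/4 \<Longrightarrow> p + q = 2*a+2*b \<Longrightarrow> q = 2*a+2*b-4*h"
  by (simp add: field_simps)
lemma para_id:
  fixes x y :: "'a::real_inner"
  shows "norm (x - y)^2 = 2*norm x^2 + 2*norm y^2 - 4 * norm ((1/2) *\<^sub>R (x+y))^2"
proof -
  have h1: "norm ((1/2) *\<^sub>R (x+y))^2 = norm (x+y)^2 / 4"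
    by (simp add: power_mult_distrib power_divide)
  have h2: "norm (x+y)^2 + norm (x-y)^2 = 2*norm x^2 + 2*norm y^2"
    by (rule ar1[OF dot_norm[of x y] dot_norm_neg[of x y]])
  show ?thesis by (rule ar2[OF h1 h2])
qed

lemma lin1: "(a::real) \<le> c \<Longrightarrow> b \<le> c \<Longrightarrow> 2*(d+a)+2*(d+b)-4*d \<le> 4*c"
  by (simp add: algebra_simps)

lemma lin2: "(t::real) < x/4 \<Longrightarrow> 4*t < x"
  by (simp add: field_simps)

lemma lin3: "a \<le> (m::real) \<Longrightarrow> 2*a+2*a-4*m \<le> 0"
  by simp

lemma infdist_lt:
  assumes "A \<noteq> {}" "infdist x A < r"
  shows "\<exists>a\<in>A. dist x a < r"
proof -
  have "(INF a\<in>A. dist x a) < r" using assms by (simp add: infdist_notempty)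
  then show ?thesis using cINF_less_iff[OF assms(1) bdd_below_image_dist] by blast
qed

lemma min_norm_exists:
  fixes C :: "'a::{real_inner,complete_space} set"
  assumes cl: "closed C" and cv: "convex C" and ne: "C \<noteq> {}"
  shows "\<exists>!v. v \<in> C \<and> (\<forall>w\<in>C. norm v \<le> norm w)"
proof -
  define d where "d = Inf ((\<lambda>c. norm c ^ 2) ` C)"
  have bdd: "bdd_below ((\<lambda>c. norm c ^ 2) ` C)"
    by (rule bdd_belowI[of _ 0]) auto
  have dle: "d \<le> norm c ^ 2" if "c \<in> C" for c
    unfolding d_def by (rule cINF_lower[OF bdd that])
  have mid: "d \<le> norm ((1/2) *\<^sub>R (x+y)) ^ 2" if "x \<in> C" "y \<in> C" for x y
  proof -
    have "(1/2) *\<^sub>R (x+y) = (1/2) *\<^sub>R x + (1 - 1/2) *\<^sub>R y"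
      by (simp add: algebra_simps)
    also have "\<dots> \<in> C" using cv that by (intro convexD) auto
    finally show ?thesis by (rule dle)
  qed
  have "\<forall>n. \<exists>c\<in>C. norm c ^ 2 < d + inverse (real (Suc n))"
  proof
    fix n
    have "Inf ((\<lambda>c. norm c ^ 2) ` C) < d + inverse (real (Suc n))" unfolding d_def by simp
    then show "\<exists>c\<in>C. norm c ^ 2 < d + inverse (real (Suc n))"
      using cINF_less_iff[OF ne bdd] by blast
  qed
  then have "\<exists>c. \<forall>n. c n \<in> C \<and> norm (c n) ^ 2 < d + inverse (real (Suc n))"
    unfolding Bex_def by (rule choice)
  then obtain c where c: "\<forall>n. c n \<in> C \<and> norm (c n) ^ 2 < d + inverse (real (Suc n))" by blast
  have cC: "\<And>n. c n \<in> C" using c by blast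
  have cn: "\<And>n. norm (c n) ^ 2 < d + inverse (real (Suc n))" using c by blast
  have cauchy: "Cauchy c"
  proof (rule CauchyI)
    fix e :: real assume e: "0 < e"
    then have "0 < e^2/4" by simp
    then obtain N where N: "inverse (real (Suc N)) < e^2/4"
      using reals_Archimedean by blast
    show "\<exists>M. \<forall>m\<ge>M. \<forall>n\<ge>M. norm (c m - c n) < e"
    proof (intro exI allI impI)
      fix m n assume mn: "N \<le> m" "N \<le> n"
      have aux: "p < d + i \<Longrightarrow> q < d + j \<Longrightarrow> d \<le> r \<Longrightarrow>
          2*p+2*q-4*r < 2*(d+i)+2*(d+j)-4*d" for p i q j r :: real by (smt (verit))
      have im: "inverse (real (Suc m)) \<le> inverse (real (Suc N))"
        using mn by (simp add: field_simps)
      have inn: "inverse (real (Suc n)) \<le> inverse (real (Suc N))"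
        using mn by (simp add: field_simps)
      have "norm (c m - c n)^2 = 2*norm (c m)^2 + 2*norm (c n)^2 - 4 * norm ((1/2) *\<^sub>R (c m + c n))^2"
        by (rule para_id)
      also have "\<dots> < 2*(d + inverse (real (Suc m))) + 2*(d + inverse (real (Suc n))) - 4*d"
        by (rule aux[OF cn[of m] cn[of n] mid[OF cC[of m] cC[of n]]])
      also have "\<dots> \<le> 4 * inverse (real (Suc N))" by (rule lin1[OF im inn])
      also have "\<dots> < e^2" by (rule lin2[OF N])
      finally have "norm (c m - c n)^2 < e^2" .
      then show "norm (c m - c n) < e"
        by (rule power_less_imp_less_base) (use e in simp)
    qed
  qed
  then obtain l where l: "c \<longlonglongrightarrow> l" using convergent_eq_Cauchy by blast
  have lC: "l \<in> C" by (rule closed_sequentially[OF cl _ l]) (use cC in simp)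
  have "(\<lambda>n. norm (c n) ^ 2) \<longlonglongrightarrow> norm l ^ 2"
    by (intro tendsto_intros l)
  moreover have "(\<lambda>n. d + inverse (real (Suc n))) \<longlonglongrightarrow> d"
    by (rule LIMSEQ_inverse_real_of_nat_add)
  ultimately have "norm l ^ 2 \<le> d"
  proof (rule LIMSEQ_le)
    show "\<exists>N. \<forall>n\<ge>N. norm (c n) ^ 2 \<le> d + inverse (real (Suc n))"
      using cn less_imp_le by blast
  qed
  then have lmin: "norm l ^ 2 \<le> norm w ^ 2" if "w \<in> C" for w
    by (rule order_trans[OF _ dle[OF that]])
  have lmin2: "\<forall>w\<in>C. norm l \<le> norm w"
  proof
    fix w assume "w \<in> C"
    show "norm l \<le> norm w" by (rule power2_le_imp_le[OF lmin[OF \<open>w \<in> C\<close>] norm_ge_zero])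
  qed
  show ?thesis
  proof (rule ex1I[of _ l])
    show "l \<in> C \<and> (\<forall>w\<in>C. norm l \<le> norm w)"
      using lC lmin2 by blast
  next
    fix y assume y: "y \<in> C \<and> (\<forall>w\<in>C. norm y \<le> norm w)"
    have yl: "norm y \<le> norm l" using y lC by blast
    have ly: "norm l \<le> norm y" using y lmin2 by blast
    have e1: "norm l = norm y" by (rule antisym[OF ly yl])
    have ym: "norm y ^ 2 \<le> norm ((1/2) *\<^sub>R (y + l)) ^ 2"
    proof -
      have "(1/2) *\<^sub>R (y+l) = (1/2) *\<^sub>R y + (1 - 1/2) *\<^sub>R l"
        by (simp add: algebra_simps)
      also have "\<dots> \<in> C" using cv y lC by (intro convexD) auto
      finally have "norm y \<le> norm ((1/2) *\<^sub>R (y + l))" using y by blast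
      then show ?thesis by (rule power_mono[OF _ norm_ge_zero])
    qed
    have "norm (y - l)^2 = 2*norm y^2 + 2*norm l^2 - 4 * norm ((1/2) *\<^sub>R (y+l))^2"
      by (rule para_id)
    also have "\<dots> = 2*norm y^2 + 2*norm y^2 - 4 * norm ((1/2) *\<^sub>R (y+l))^2"
      by (simp only: e1)
    also have "\<dots> \<le> 0" by (rule lin3[OF ym])
    finally have "norm (y - l)^2 \<le> 0" .
    then show "y = l" by simp
  qed
qed

lemma infdist_ge:
  assumes "A \<noteq> {}" "\<And>a. a \<in> A \<Longrightarrow> r \<le> dist x a"
  shows "r \<le> infdist x A"
  using assms by (simp add: infdist_notempty cINF_greatest)

lemma strong_exp_eps:
  assumes se: "strongly_exposes f A e" and eps: "0 < \<epsilon>"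
  shows "\<exists>\<eta>>0. \<forall>a\<in>A. f e - \<eta> < f a \<longrightarrow> dist a e < \<epsilon>"
proof (rule ccontr)
  assume "\<not> ?thesis"
  then have neg0: "\<forall>\<eta>. \<eta> \<le> 0 \<or> (\<exists>a\<in>A. f e - \<eta> < f a \<and> \<epsilon> \<le> dist a e)"
    by (simp add: not_less)
  have neg: "\<exists>a\<in>A. f e - \<eta> < f a \<and> \<epsilon> \<le> dist a e" if "\<eta> > 0" for \<eta>
  proof -
    have "\<not> \<eta> \<le> 0" using that by simp
    then show ?thesis using neg0 by blast
  qed
  have "\<forall>n. \<exists>a\<in>A. f e - inverse (real (Suc n)) < f a \<and> \<epsilon> \<le> dist a e"
  proof
    fix n :: nat
    have "inverse (real (Suc n)) > 0" by simp
    then show "\<exists>a\<in>A. f e - inverse (real (Suc n)) < f a \<and> \<epsilon> \<le> dist a e" by (rule neg)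
  qed
  then have "\<exists>xs. \<forall>n. xs n \<in> A \<and> f e - inverse (real (Suc n)) < f (xs n) \<and> \<epsilon> \<le> dist (xs n) e"
    unfolding Bex_def by (rule choice)
  then obtain xs where xs: "\<forall>n. xs n \<in> A \<and> f e - inverse (real (Suc n)) < f (xs n) \<and> \<epsilon> \<le> dist (xs n) e"
    by blast
  have xA: "\<And>n. xs n \<in> A" using xs by blast
  have xf: "\<And>n. f e - inverse (real (Suc n)) < f (xs n)" using xs by blast
  have xd: "\<And>n. \<epsilon> \<le> dist (xs n) e" using xs by blast
  have le: "\<And>n. f (xs n) \<le> f e" using se xA unfolding strongly_exposes_def by blast
  have "(\<lambda>n. f (xs n)) \<longlonglongrightarrow> f e"
  proof (rule tendsto_sandwich[of "\<lambda>n. f e + - inverse (real (Suc n))" _ _ "\<lambda>n. f e"])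
    show "\<forall>\<^sub>F n in sequentially. f e + - inverse (real (Suc n)) \<le> f (xs n)"
    proof (intro always_eventually allI)
      fix n show "f e + - inverse (real (Suc n)) \<le> f (xs n)" using xf[of n] by simp
    qed
    show "\<forall>\<^sub>F n in sequentially. f (xs n) \<le> f e" using le by (simp add: always_eventually)
    show "(\<lambda>n. f e + - inverse (real (Suc n))) \<longlonglongrightarrow> f e"
      by (rule LIMSEQ_inverse_real_of_nat_add_minus)
    show "(\<lambda>n. f e) \<longlonglongrightarrow> f e" by simp
  qed
  then have "xs \<longlonglongrightarrow> e" using se xA unfolding strongly_exposes_def by blast
  then obtain n0 where "\<forall>n\<ge>n0. dist (xs n) e < \<epsilon>" using eps unfolding lim_sequentially by blast
  then show False using xd[of n0] by auto
qed

lemma convex_minus_set: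
  assumes "convex A" "convex B"
  shows "convex (minus_set B A)"
  unfolding convex_def minus_set_def
proof (clarify)
  fix a b a' b' :: 'a and u v :: real
  assume h: "a \<in> A" "b \<in> B" "a' \<in> A" "b' \<in> B" "0 \<le> u" "0 \<le> v" "u + v = 1"
  have "u *\<^sub>R (b - a) + v *\<^sub>R (b' - a') = (u *\<^sub>R b + v *\<^sub>R b') - (u *\<^sub>R a + v *\<^sub>R a')"
    by (simp add: algebra_simps)
  moreover have "u *\<^sub>R b + v *\<^sub>R b' \<in> B" using assms(2) h by (simp add: convexD)
  moreover have "u *\<^sub>R a + v *\<^sub>R a' \<in> A" using assms(1) h by (simp add: convexD)
  ultimately show "\<exists>a'' b''. u *\<^sub>R (b - a) + v *\<^sub>R (b' - a') = b'' - a'' \<and> a'' \<in> A \<and> b'' \<in> B"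
    by blast
qed

theorem proposition4p15:
  fixes A B :: "'a::{real_inner, complete_space} set"
    and f :: "'a \<Rightarrow> real" and e :: 'a
  assumes "A \<noteq> {}" "B \<noteq> {}" "closed A" "closed B" "convex A" "convex B"
    and "bounded_linear f" "onorm f = 1"
    and "e \<in> A \<inter> (\<lambda>b. b - displacement A B) ` B"
    and "\<forall>y \<in> (\<lambda>b. b - displacement A B) ` B. f e \<le> f y"
    and "\<forall>a \<in> A. f a \<le> f e"
    and "strongly_exposes f A e"
  shows "regular_couple A B"
proof -
  define v where "v = displacement A B"
  define C where "C = closure (minus_set B A)"
  have Cne: "C \<noteq> {}" using assms(1,2) unfolding C_def minus_set_def by auto
  have Ccv: "convex C" unfolding C_def using assms(5,6) convex_minus_set convex_closure by blast
  have Ccl: "closed C" unfolding C_def by simp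
  have vC: "v \<in> C \<and> (\<forall>w\<in>C. norm v \<le> norm w)"
    unfolding v_def displacement_def C_def[symmetric]
    by (rule theI'[OF min_norm_exists[OF Ccl Ccv Cne]])
  have vle: "norm v \<le> dist a b" if "a \<in> A" "b \<in> B" for a b
  proof -
    have "b - a \<in> minus_set B A" unfolding minus_set_def using that by blast
    then have "b - a \<in> C" unfolding C_def by (rule subsetD[OF closure_subset])
    then have "norm v \<le> norm (b - a)" using vC by blast
    then show ?thesis by (simp add: dist_norm norm_minus_commute)
  qed
  have eA: "e \<in> A" using assms(9) by blast
  obtain b0 where b0: "b0 \<in> B" "e = b0 - v" using assms(9) unfolding v_def by blast
  have deb: "dist e b0 = norm v" using b0 by (simp add: dist_norm)
  have ieB1: "infdist e B \<le> norm v" using infdist_le[OF b0(1), of e] deb by simp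
  have ieB2: "norm v \<le> infdist e B" by (rule infdist_ge[OF assms(2)]) (rule vle[OF eA])
  have ieB: "infdist e B = norm v" using ieB1 ieB2 by (rule antisym)
  have ib1: "infdist b0 A \<le> norm v" using infdist_le[OF eA, of b0] deb by (simp add: dist_commute)
  have ib2: "norm v \<le> infdist b0 A"
  proof (rule infdist_ge[OF assms(1)])
    fix a assume "a \<in> A"
    then have "norm v \<le> dist a b0" by (rule vle[OF _ b0(1)])
    then show "norm v \<le> dist b0 a" by (simp add: dist_commute)
  qed
  have ib0: "infdist b0 A = norm v" using ib1 ib2 by (rule antisym)
  have geA: "norm v \<le> infdist a B" if "a \<in> A" for a
    using infdist_ge[OF assms(2)] vle[OF that] by blast
  have sd: "set_dist A B = norm v"
  proof -
    have bdd: "bdd_below ((\<lambda>a. infdist a B) ` A)"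
      by (rule bdd_belowI[of _ 0]) (auto simp: infdist_nonneg)
    have "set_dist A B \<le> norm v" unfolding set_dist_def
      using cINF_lower[OF bdd eA] ieB by simp
    moreover have "norm v \<le> set_dist A B" unfolding set_dist_def
      using assms(1) geA by (simp add: cINF_greatest)
    ultimately show ?thesis by simp
  qed
  have eE: "e \<in> nearest_A A B" unfolding nearest_A_def using eA ieB sd by simp
  have b0F: "b0 \<in> nearest_B A B" unfolding nearest_B_def using b0 ib0 sd by simp
  have fn: "\<bar>f x\<bar> \<le> norm x" for x
    using onorm[OF assms(7), of x] assms(8) by simp
  have flin: "f x - f y = f (x - y)" for x y
    by (rule linear_diff[OF bounded_linear.linear[OF assms(7)], symmetric])
  have Bvne: "(\<lambda>b. b - v) ` B \<noteq> {}" using assms(2) by simp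
  have reg: "\<exists>\<delta>>0. \<forall>x. max (infdist x A) (infdist x ((\<lambda>b. b - v) ` B)) \<le> \<delta>
                      \<longrightarrow> infdist x (nearest_A A B) \<le> \<epsilon>" if eps: "\<epsilon> > 0" for \<epsilon>
  proof -
    obtain \<eta> where eta: "\<eta> > 0" "\<forall>a\<in>A. f e - \<eta> < f a \<longrightarrow> dist a e < \<epsilon>/2"
      using strong_exp_eps[OF assms(12), of "\<epsilon>/2"] eps by auto
    define \<delta> where "\<delta> = min (\<epsilon>/4) (\<eta>/4)"
    have dpos: "\<delta> > 0" using eps eta unfolding \<delta>_def by simp
    have d4: "4*\<delta> \<le> \<eta>" unfolding \<delta>_def by simp
    have d2: "2*\<delta> \<le> \<epsilon>/2" unfolding \<delta>_def by simp
    show ?thesis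
    proof (intro exI[of _ \<delta>] conjI allI impI dpos)
      fix x assume hx: "max (infdist x A) (infdist x ((\<lambda>b. b - v) ` B)) \<le> \<delta>"
      obtain a where a: "a \<in> A" "dist x a < 2*\<delta>"
        using infdist_lt[OF assms(1), of x "2*\<delta>"] hx dpos by auto
      obtain y where y: "y \<in> (\<lambda>b. b - v) ` B" "dist x y < 2*\<delta>"
        using infdist_lt[OF Bvne, of x "2*\<delta>"] hx dpos by auto
      have fy: "f e \<le> f y" using y(1) assms(10) unfolding v_def by blast
      have "f y - f a \<le> norm (y - a)" using fn[of "y - a"] flin[of y a] by simp
      also have "\<dots> \<le> dist x y + dist x a"
        using dist_triangle3[of y a x] by (simp add: dist_norm)
      also have "\<dots> < 4*\<delta>" using a y by simp
      also have "\<dots> \<le> \<eta>" using d4 by simp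
      finally have "f e - \<eta> < f a" using fy by simp
      then have "dist a e < \<epsilon>/2" using eta a by blast
      then have "dist x e < \<epsilon>"
        using a(2) dist_triangle[of x e a] d2 by linarith
      then show "infdist x (nearest_A A B) \<le> \<epsilon>"
        using infdist_le[OF eE, of x] by simp
    qed
  qed
  show ?thesis unfolding regular_couple_def v_def[symmetric]
    using eE b0F reg by blast
qed

end
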